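(* Let $n\ge 2$, $k\ge 1$, and let $f_i(x)=\frac12 a_ix^2-b_ix$ ($i=1,\dots,n$) be univariate functions satisfying Assumption (B) with parameters $\lambda,L,G$, where $F(x)=\frac1n\sum_{i=1}^n f_i(x)=\frac{\lambda}{2}x^2-bx$. Assume $\frac{L}{\lambda}\le \frac{nk}{\log(n^{1/2}k)}$. Then SGD with single shuffling, run for $k$ epochs from an arbitrary $x_0\in\mathbb{R}$ with constant step size $\eta=\frac{\log(n^{1/2}k)}{\lambda nk}$, satisfies \[ \mathbb{E}\Big[F(x_k)-\inf_xF(x)\Big]\;\le\;\tilde{O}\left(\frac{\lambda}{nk^2}(x_0-x^* )^2+\frac{G^2L^2}{\lambda^3nk^2}\right), \] where $x^*=\arg\min_x F(x)$, the expectation is over the uniformly random permutation, and $\tilde O(\cdot)$ hides a universal multiplicative constant and factors polylogarithmic in $n$ and $k$.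
   Context: Assumption (B) (parameters $\lambda,L,G>0$): $F(x)=\frac1n\sum_{i=1}^nf_i(x)$ is $\lambda$-strongly convex on $\mathbb{R}$; each $f_i(x)=\frac{a_i}{2}x^2-b_ix$ is convex (i.e. $a_i\ge 0$), has $L$-Lipschitz derivative (i.e. $a_i\le L$), and satisfies $|f_i'(x^* )|\le G$ where $x^*=\arg\min_xF(x)$. SGD with single shuffling: one uniformly random permutation $\sigma$ of $\{1,\dots,n\}$ is drawn once; then for each of $k$ epochs, perform the updates $x\leftarrow x-\eta f_{\sigma(j)}'(x)$ for $j=1,\dots,n$ in order; $x_t$ is the iterate at the end of epoch $t$. *)

theory Defs
  imports "HOL-Analysis.Analysis" "HOL-Combinatorics.Permutations"
begin

definition F_obj :: "nat \<Rightarrow> (nat \<Rightarrow> real) \<Rightarrow> (nat \<Rightarrow> real) \<Rightarrow> real \<Rightarrow> real" where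
  "F_obj n a b x = (1 / real n) * (\<Sum>i<n. a i / 2 * x^2 - b i * x)"

definition sgd_epoch :: "nat \<Rightarrow> (nat \<Rightarrow> real) \<Rightarrow> (nat \<Rightarrow> real) \<Rightarrow> real \<Rightarrow> (nat \<Rightarrow> nat) \<Rightarrow> real \<Rightarrow> real" where
  "sgd_epoch n a b \<eta> \<sigma> x = fold (\<lambda>j y. y - \<eta> * (a (\<sigma> j) * y - b (\<sigma> j))) [0..<n] x"

definition sgd_ss :: "nat \<Rightarrow> (nat \<Rightarrow> real) \<Rightarrow> (nat \<Rightarrow> real) \<Rightarrow> real \<Rightarrow> (nat \<Rightarrow> nat) \<Rightarrow> nat \<Rightarrow> real \<Rightarrow> real" where
  "sgd_ss n a b \<eta> \<sigma> k x0 = (sgd_epoch n a b \<eta> \<sigma> ^^ k) x0"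

definition perm_expect :: "nat \<Rightarrow> ((nat \<Rightarrow> nat) \<Rightarrow> real) \<Rightarrow> real" where
  "perm_expect n g = (\<Sum>\<sigma>\<in>{\<sigma>. \<sigma> permutes {..<n}}. g \<sigma>) / fact n"

end

theory Submission
  imports Defs
begin


lemma perm_reindex:
  assumes "\<pi> permutes {..<n}"
  shows "(\<Sum>\<sigma>\<in>{\<sigma>. \<sigma> permutes {..<n}}. h \<sigma>) = (\<Sum>\<sigma>\<in>{\<sigma>. \<sigma> permutes {..<n}}. h (\<sigma> \<circ> \<pi>))"
  using sum_permutations_compose_right[OF assms] by simp

lemma exists_pi:
  assumes "u < n" "u' < n" "j < n" "j' < n" "u \<noteq> u'" "j \<noteq> j'"
  shows "\<exists>\<pi>. \<pi> permutes {..<n} \<and> \<pi> u = j \<and> \<pi> u' = j'"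
proof -
  define p1 where "p1 = Transposition.transpose u j"
  define v where "v = p1 u'"
  define p2 where "p2 = Transposition.transpose v j'"
  have 1: "p1 permutes {..<n}" unfolding p1_def using assms by (intro permutes_swap_id) auto
  have vn: "v < n" unfolding v_def using permutes_in_image[OF 1] assms by auto
  have 2: "p2 permutes {..<n}" unfolding p2_def using assms vn by (intro permutes_swap_id) auto
  have vj: "v \<noteq> j" unfolding v_def p1_def using assms
    by (metis transpose_apply_first transpose_eq_imp_eq)
  have "(p2 \<circ> p1) u = j" using vj assms unfolding p1_def p2_def by auto
  moreover have "(p2 \<circ> p1) u' = j'" unfolding p2_def v_def by simp
  ultimately show ?thesis using permutes_compose[OF 1 2] by blast
qed

definition TT :: "nat \<Rightarrow> (nat \<Rightarrow> real) \<Rightarrow> nat \<Rightarrow> nat \<Rightarrow> real" where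
  "TT n g j j' = (\<Sum>\<sigma>\<in>{\<sigma>. \<sigma> permutes {..<n}}. g (\<sigma> j) * g (\<sigma> j'))"

lemma TT_sym:
  assumes "u < n" "u' < n" "j < n" "j' < n" "u \<noteq> u' \<longleftrightarrow> j \<noteq> j'"
  shows "TT n g u u' = TT n g j j'"
proof (cases "u = u'")
  case True
  then have jj: "j = j'" using assms by auto
  obtain \<pi> where p: "\<pi> permutes {..<n}" "\<pi> u = j"
    using permutes_swap_id[of u "{..<n}" j] assms by (metis lessThan_iff transpose_apply_first)
  show ?thesis unfolding TT_def using perm_reindex[OF p(1), of "\<lambda>\<sigma>. g (\<sigma> u) * g (\<sigma> u')"] p True jj by simp
next
  case False
  then obtain \<pi> where p: "\<pi> permutes {..<n}" "\<pi> u = j" "\<pi> u' = j'"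
    using exists_pi[of u n u' j j'] assms by auto
  show ?thesis unfolding TT_def using perm_reindex[OF p(1), of "\<lambda>\<sigma>. g (\<sigma> u) * g (\<sigma> u')"] p by simp
qed

lemma sum_perm_g:
  assumes "\<sigma> permutes {..<n}"
  shows "(\<Sum>j<n. h (\<sigma> j)) = (\<Sum>j<n. h j)"
  using sum.permute[OF assms, of h] by simp

lemma perm_sq_bound:
  assumes n2: "n \<ge> 2" and g0: "(\<Sum>l<n. g l) = 0" and gG: "\<forall>l<n. \<bar>g l\<bar> \<le> G" and "i \<le> n"
  shows "(\<Sum>\<sigma>\<in>{\<sigma>. \<sigma> permutes {..<n}}. (\<Sum>j<i. g (\<sigma> j))^2) \<le> real i * fact n * G^2"
proof -
  let ?P = "{\<sigma>. \<sigma> permutes {..<n}}"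
  define \<delta> where "\<delta> = TT n g 0 0"
  define \<tau> where "\<tau> = TT n g 0 1"
  have diag: "TT n g j j = \<delta>" if "j < n" for j
    unfolding \<delta>_def using TT_sym[of j n j 0 0] that n2 by auto
  have off: "TT n g j j' = \<tau>" if "j < n" "j' < n" "j \<noteq> j'" for j j'
    unfolding \<tau>_def using TT_sym[of j n j' 0 1] that n2 by auto
  have fin: "finite ?P" using finite_permutations by auto
  have cardP: "card ?P = fact n" using card_permutations[of "{..<n}" n] by simp
  have "(\<Sum>j<n. TT n g j j) = (\<Sum>\<sigma>\<in>?P. \<Sum>j<n. g (\<sigma> j) * g (\<sigma> j))"
    unfolding TT_def by (rule sum.swap)
  also have "\<dots> = (\<Sum>\<sigma>\<in>?P. \<Sum>l<n. g l * g l)"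
    by (rule sum.cong[OF refl]) (use sum_perm_g[of _ n "\<lambda>l. g l * g l"] in auto)
  also have "\<dots> = fact n * (\<Sum>l<n. g l * g l)" using cardP by simp
  finally have dsum: "real n * \<delta> = fact n * (\<Sum>l<n. g l * g l)" using diag by simp
  have "(\<Sum>l<n. g l * g l) \<le> (\<Sum>l<n. G^2)"
  proof (rule sum_mono)
    fix l assume "l \<in> {..<n}"
    then have h: "\<bar>g l\<bar> \<le> G" using gG by auto
    have "\<bar>g l\<bar> * \<bar>g l\<bar> \<le> G * G" by (rule mult_mono) (use h in auto)
    then show "g l * g l \<le> G^2" by (simp add: power2_eq_square abs_mult[symmetric])
  qed
  then have "(\<Sum>l<n. g l * g l) \<le> real n * G^2" by simp
  then have "fact n * (\<Sum>l<n. g l * g l) \<le> fact n * (real n * G^2)"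
    by (rule mult_left_mono) simp
  then have "real n * \<delta> \<le> fact n * (real n * G^2)" using dsum by simp
  then have dle: "\<delta> \<le> fact n * G^2" using n2 by (simp add: algebra_simps)
  have dge: "\<delta> \<ge> 0" unfolding \<delta>_def TT_def by (auto intro: sum_nonneg)
  have "(\<Sum>j<n. \<Sum>j'<n. TT n g j j') = (\<Sum>\<sigma>\<in>?P. \<Sum>j<n. \<Sum>j'<n. g (\<sigma> j) * g (\<sigma> j'))"
    unfolding TT_def by (simp add: sum.swap[of _ ?P])
  also have "\<dots> = (\<Sum>\<sigma>\<in>?P. (\<Sum>j<n. g (\<sigma> j)) * (\<Sum>j'<n. g (\<sigma> j')))"
    by (simp add: sum_product)
  also have "\<dots> = 0"
    by (rule sum.neutral) (use sum_perm_g[of _ n g] g0 in auto)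
  finally have tot: "(\<Sum>j<n. \<Sum>j'<n. TT n g j j') = 0" .
  have rowsum: "(\<Sum>j'<m. TT n g j j') = (if j < m then \<delta> + real (m - 1) * \<tau> else real m * \<tau>)"
    if "j < n" "m \<le> n" for j m
  proof -
    have "(\<Sum>j'<m. TT n g j j') = (\<Sum>j'\<in>{..<m} - {j}. TT n g j j') + (if j < m then TT n g j j else 0)"
      by (cases "j < m") (auto simp: sum.remove[of "{..<m}" j] ac_simps)
    also have "(\<Sum>j'\<in>{..<m} - {j}. TT n g j j') = (\<Sum>j'\<in>{..<m} - {j}. \<tau>)"
      by (rule sum.cong[OF refl]) (use off that in auto)
    also have "\<dots> = real (card ({..<m} - {j})) * \<tau>" by simp
    finally show ?thesis using diag that by (cases "j < m") auto
  qed
  have "(\<Sum>j<n. \<Sum>j'<n. TT n g j j') = real n * (\<delta> + real (n - 1) * \<tau>)"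
    using rowsum[of _ n] n2 by (simp add: of_nat_diff)
  then have "\<delta> + real (n - 1) * \<tau> = 0" using tot n2 by simp
  then have "real (n - 1) * \<tau> \<le> 0" using dge by linarith
  moreover have "real (n - 1) > 0" using n2 by simp
  ultimately have tle: "\<tau> \<le> 0" by (simp add: mult_le_0_iff)
  have "(\<Sum>\<sigma>\<in>?P. (\<Sum>j<i. g (\<sigma> j))^2) = (\<Sum>j<i. \<Sum>j'<i. TT n g j j')"
    unfolding TT_def power2_eq_square sum_product by (simp add: sum.swap[of _ ?P])
  also have "\<dots> = (\<Sum>j<i. \<delta> + real (i - 1) * \<tau>)"
    by (rule sum.cong[OF refl]) (use rowsum assms in auto)
  also have "\<dots> \<le> (\<Sum>j<i. fact n * G^2)"
  proof (rule sum_mono)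
    fix j assume "j \<in> {..<i}"
    have "real (i - 1) * \<tau> \<le> 0" using tle by (simp add: mult_nonneg_nonpos)
    then show "\<delta> + real (i - 1) * \<tau> \<le> fact n * G^2" using dle by linarith
  qed
  finally show ?thesis by simp
qed

primrec Wr :: "(nat \<Rightarrow> real) \<Rightarrow> (nat \<Rightarrow> real) \<Rightarrow> real \<Rightarrow> (nat \<Rightarrow> nat) \<Rightarrow> nat \<Rightarrow> real" where
  "Wr a g \<eta> \<sigma> 0 = 0"
| "Wr a g \<eta> \<sigma> (Suc m) = a (\<sigma> m) * (\<Sum>j<m. g (\<sigma> j)) + (1 - \<eta> * a (\<sigma> m)) * Wr a g \<eta> \<sigma> m"

lemma fold_form:
  "fold (\<lambda>j y. y - \<eta> * (a (\<sigma> j) * y - b (\<sigma> j))) [0..<m] x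
   = xs + (\<Prod>j<m. 1 - \<eta> * a (\<sigma> j)) * (x - xs) - \<eta> * (\<Sum>j<m. a (\<sigma> j) * xs - b (\<sigma> j))
     + \<eta>^2 * Wr a (\<lambda>i. a i * xs - b i) \<eta> \<sigma> m"
proof (induction m)
  case 0
  then show ?case by simp
next
  case (Suc m)
  define y where "y = fold (\<lambda>j y. y - \<eta> * (a (\<sigma> j) * y - b (\<sigma> j))) [0..<m] x"
  have hy: "y = xs + (\<Prod>j<m. 1 - \<eta> * a (\<sigma> j)) * (x - xs) - \<eta> * (\<Sum>j<m. a (\<sigma> j) * xs - b (\<sigma> j))
     + \<eta>^2 * Wr a (\<lambda>i. a i * xs - b i) \<eta> \<sigma> m" using Suc.IH unfolding y_def .
  have "fold (\<lambda>j y. y - \<eta> * (a (\<sigma> j) * y - b (\<sigma> j))) [0..<Suc m] x = y - \<eta> * (a (\<sigma> m) * y - b (\<sigma> m))"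
    by (simp add: y_def)
  also have "\<dots> = xs + (\<Prod>j<Suc m. 1 - \<eta> * a (\<sigma> j)) * (x - xs) - \<eta> * (\<Sum>j<Suc m. a (\<sigma> j) * xs - b (\<sigma> j))
     + \<eta>^2 * Wr a (\<lambda>i. a i * xs - b i) \<eta> \<sigma> (Suc m)"
    unfolding hy by (simp add: algebra_simps power2_eq_square)
  finally show ?case .
qed

lemma Wr_bound:
  assumes "\<forall>i<n. 0 \<le> a i \<and> a i \<le> L" "0 \<le> \<eta>" "\<eta> * L \<le> 1" "\<sigma> permutes {..<n}"
  shows "m \<le> n \<Longrightarrow> \<bar>Wr a g \<eta> \<sigma> m\<bar> \<le> L * (\<Sum>j<m. \<bar>\<Sum>i<j. g (\<sigma> i)\<bar>)"
proof (induction m)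
  case 0
  then show ?case by simp
next
  case (Suc m)
  have sm: "\<sigma> m < n" using permutes_in_image[OF assms(4)] Suc by auto
  then have a0: "0 \<le> a (\<sigma> m)" and aL: "a (\<sigma> m) \<le> L" using assms(1) by auto
  have "\<eta> * a (\<sigma> m) \<le> \<eta> * L" using aL assms(2) by (rule mult_left_mono)
  then have c0: "0 \<le> 1 - \<eta> * a (\<sigma> m)" and c1: "1 - \<eta> * a (\<sigma> m) \<le> 1"
    using assms(3) a0 assms(2) by auto
  have IH: "\<bar>Wr a g \<eta> \<sigma> m\<bar> \<le> L * (\<Sum>j<m. \<bar>\<Sum>i<j. g (\<sigma> i)\<bar>)" using Suc by auto
  have "\<bar>Wr a g \<eta> \<sigma> (Suc m)\<bar> \<le> \<bar>a (\<sigma> m) * (\<Sum>j<m. g (\<sigma> j))\<bar> + \<bar>(1 - \<eta> * a (\<sigma> m)) * Wr a g \<eta> \<sigma> m\<bar>"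
    by simp
  also have "\<bar>a (\<sigma> m) * (\<Sum>j<m. g (\<sigma> j))\<bar> \<le> L * \<bar>\<Sum>j<m. g (\<sigma> j)\<bar>"
    unfolding abs_mult using a0 aL by (intro mult_right_mono) auto
  also have "\<bar>(1 - \<eta> * a (\<sigma> m)) * Wr a g \<eta> \<sigma> m\<bar> \<le> \<bar>Wr a g \<eta> \<sigma> m\<bar>"
    unfolding abs_mult using c0 c1 by (simp add: mult_left_le_one_le)
  finally show ?case using IH by (simp add: algebra_simps)
qed

lemma epoch_form:
  assumes "\<sigma> permutes {..<n}" "(\<Sum>i<n. a i * xs - b i) = 0"
  shows "sgd_epoch n a b \<eta> \<sigma> x = xs + (\<Prod>i<n. 1 - \<eta> * a i) * (x - xs) + \<eta>^2 * Wr a (\<lambda>i. a i * xs - b i) \<eta> \<sigma> n"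
proof -
  have p: "(\<Prod>j<n. 1 - \<eta> * a (\<sigma> j)) = (\<Prod>i<n. 1 - \<eta> * a i)"
    using prod.permute[OF assms(1), of "\<lambda>i. 1 - \<eta> * a i"] by simp
  have s: "(\<Sum>j<n. a (\<sigma> j) * xs - b (\<sigma> j)) = 0"
    using sum_perm_g[OF assms(1), of "\<lambda>i. a i * xs - b i"] assms(2) by simp
  have "sgd_epoch n a b \<eta> \<sigma> x = fold (\<lambda>j y. y - \<eta> * (a (\<sigma> j) * y - b (\<sigma> j))) [0..<n] x"
    unfolding sgd_epoch_def ..
  also have "\<dots> = xs + (\<Prod>j<n. 1 - \<eta> * a (\<sigma> j)) * (x - xs) - \<eta> * (\<Sum>j<n. a (\<sigma> j) * xs - b (\<sigma> j))
     + \<eta>^2 * Wr a (\<lambda>i. a i * xs - b i) \<eta> \<sigma> n" by (rule fold_form)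
  finally show ?thesis unfolding p s by simp
qed

lemma iter_form:
  fixes xs c D :: real
  assumes "\<And>x. f x = xs + c * (x - xs) + D"
  shows "(f ^^ t) x = xs + c^t * (x - xs) + (\<Sum>s<t. c^s) * D"
proof (induction t)
  case 0
  then show ?case by simp
next
  case (Suc t)
  have geo: "(\<Sum>s<Suc t. c^s) = 1 + c * (\<Sum>s<t. c^s)"
    by (simp only: sum.lessThan_Suc_shift power_Suc sum_distrib_left power_0)
  have "(f ^^ Suc t) x = xs + c * ((f ^^ t) x - xs) + D" using assms by simp
  also have "\<dots> = xs + c * (c^t * (x - xs) + (\<Sum>s<t. c^s) * D) + D" unfolding Suc.IH by simp
  also have "\<dots> = xs + c^(Suc t) * (x - xs) + (1 + c * (\<Sum>s<t. c^s)) * D" by (simp add: algebra_simps)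
  finally show ?case using geo by simp
qed


lemma main_bound:
  fixes n k :: nat and a b :: "nat \<Rightarrow> real" and lam L G x0 xs \<eta> :: real
  assumes n2: "n \<ge> 2" and k1: "k \<ge> 1" and lp: "lam > 0" and Lp: "L > 0" and Gp: "G > 0"
  and aB: "\<forall>i<n. 0 \<le> a i \<and> a i \<le> L" and al: "(\<Sum>i<n. a i) / real n = lam"
  and mn: "\<forall>x. F_obj n a b xs \<le> F_obj n a b x" and gG: "\<forall>i<n. \<bar>a i * xs - b i\<bar> \<le> G"
  and LL: "L / lam \<le> real n * real k / ln (sqrt (real n) * real k)"
  and eta: "\<eta> = ln (sqrt (real n) * real k) / (lam * real n * real k)"
  shows "perm_expect n (\<lambda>\<sigma>. F_obj n a b (sgd_ss n a b \<eta> \<sigma> k x0) - (INF x. F_obj n a b x))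
        \<le> 1 * (1 + ln (real n * real k)) powr 4 *
            (lam / (real n * real k^2) * (x0 - xs)^2
             + G^2 * L^2 / (lam^3 * real n * real k^2))"
proof -
  define l where "l = ln (sqrt (real n) * real k)"
  have npos: "real n > 0" and kpos: "real k > 0" using n2 k1 by auto
  have sq1: "sqrt (real n) > 1" using n2 by simp
  have sk: "sqrt (real n) * real k > 1"
  proof -
    have "sqrt (real n) \<le> sqrt (real n) * real k" using k1 sq1 by simp
    then show ?thesis using sq1 by linarith
  qed
  have lpos: "l > 0" unfolding l_def using sk by simp
  define B where "B = (\<Sum>i<n. b i) / real n"
  have suma: "(\<Sum>i<n. a i) = lam * real n" using al npos by (simp add: field_simps)
  have Fx: "F_obj n a b x = lam / 2 * x^2 - B * x" for x
  proof -
    have "F_obj n a b x = (1 / real n) * ((\<Sum>i<n. a i) / 2 * x^2 - (\<Sum>i<n. b i) * x)"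
      unfolding F_obj_def by (simp add: sum_subtractf sum_distrib_right sum_divide_distrib)
    then show ?thesis unfolding suma B_def using npos by (simp add: field_simps)
  qed
  have "(lam * xs - B)^2 = 2 * lam * (F_obj n a b xs - F_obj n a b (B / lam))"
    unfolding Fx using lp by (simp add: field_simps power2_eq_square)
  also have "\<dots> \<le> 0" using mn lp by (simp add: mult_nonneg_nonpos)
  finally have "lam * xs = B" by simp
  then have Beq: "B = lam * xs" by simp
  have gsum: "(\<Sum>i<n. a i * xs - b i) = 0"
  proof -
    have "(\<Sum>i<n. a i * xs - b i) = (\<Sum>i<n. a i) * xs - (\<Sum>i<n. b i)"
      by (simp add: sum_subtractf sum_distrib_right)
    also have "(\<Sum>i<n. b i) = B * real n" unfolding B_def using npos by simp
    finally show ?thesis unfolding suma Beq by simp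
  qed
  have Fdiff: "F_obj n a b x - F_obj n a b xs = lam / 2 * (x - xs)^2" for x
    unfolding Fx Beq by (simp add: algebra_simps power2_eq_square)
  have INF: "(INF x. F_obj n a b x) = F_obj n a b xs"
    by (rule cInf_eq_minimum) (use mn in auto)
  have etal: "\<eta> = l / (lam * real n * real k)" unfolding eta l_def ..
  have etap: "\<eta> > 0" unfolding etal using lpos lp npos kpos by simp
  have "L * l \<le> lam * real n * real k"
  proof -
    have "L / lam \<le> real n * real k / l" using LL unfolding l_def .
    then have "L \<le> lam * (real n * real k) / l" using lp by (simp add: field_simps)
    then show ?thesis using lpos by (simp add: pos_le_divide_eq)
  qed
  then have etaL: "\<eta> * L \<le> 1" unfolding etal using lp npos kpos by (simp add: field_simps)
  define c where "c = (\<Prod>i<n. 1 - \<eta> * a i)"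
  have fac: "0 \<le> 1 - \<eta> * a i \<and> 1 - \<eta> * a i \<le> exp (- (\<eta> * a i))" if "i < n" for i
  proof -
    have "\<eta> * a i \<le> \<eta> * L" using aB that etap by (intro mult_left_mono) auto
    then show ?thesis using etaL exp_ge_add_one_self[of "- (\<eta> * a i)"] by simp
  qed
  have c0: "0 \<le> c" unfolding c_def using fac by (intro prod_nonneg) auto
  have "c \<le> (\<Prod>i<n. exp (- (\<eta> * a i)))" unfolding c_def using fac by (intro prod_mono) auto
  also have "\<dots> = exp (\<Sum>i<n. - (\<eta> * a i))" by (simp add: exp_sum)
  also have "(\<Sum>i<n. - (\<eta> * a i)) = - (\<eta> * lam * real n)"
    by (simp add: sum_negf sum_distrib_left[symmetric] suma)
  finally have cexp: "c \<le> exp (- (\<eta> * lam * real n))" .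
  have c1: "c \<le> 1" using cexp etap lp npos by (smt (verit) exp_le_one_iff mult_pos_pos)
  have "c ^ k \<le> exp (- (\<eta> * lam * real n)) ^ k" using cexp c0 by (rule power_mono)
  also have "\<dots> = exp (real k * (- (\<eta> * lam * real n)))" by (rule exp_of_nat_mult[symmetric])
  also have "real k * (- (\<eta> * lam * real n)) = - l" unfolding etal using lp npos kpos by (simp add: field_simps)
  also have "exp (- l) = 1 / (sqrt (real n) * real k)"
    unfolding l_def using sk by (simp add: exp_minus divide_inverse)
  finally have ck: "c ^ k \<le> 1 / (sqrt (real n) * real k)" .
  have ck2: "(c ^ k)^2 \<le> 1 / (real n * real k^2)"
  proof -
    have "(c ^ k)^2 \<le> (1 / (sqrt (real n) * real k))^2" using ck c0 by (intro power_mono) auto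
    also have "\<dots> = 1 / (real n * real k^2)" using npos by (simp add: power_mult_distrib power_divide)
    finally show ?thesis .
  qed
  define A where "A = (\<Sum>s<k. c^s)"
  have A0: "0 \<le> A" unfolding A_def using c0 by (intro sum_nonneg) auto
  have Ak: "A \<le> real k"
  proof -
    have "A \<le> (\<Sum>s<k. 1)" unfolding A_def using c0 c1 by (intro sum_mono power_le_one) auto
    then show ?thesis by simp
  qed
  define g where "g = (\<lambda>i. a i * xs - b i)"
  define Q where "Q = (\<lambda>\<sigma>. \<Sum>j<n. (\<Sum>i<j. g (\<sigma> i))^2)"
  define X where "X = lam * (x0 - xs)^2 / (real n * real k^2)"
  define Y where "Y = lam * real k^2 * \<eta>^4 * L^2 * real n"
  have Y0: "Y \<ge> 0" unfolding Y_def using lp etap by simp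
  let ?P = "{\<sigma>. \<sigma> permutes {..<n}}"
  have pt: "F_obj n a b (sgd_ss n a b \<eta> \<sigma> k x0) - (INF x. F_obj n a b x) \<le> X + Y * Q \<sigma>"
    if sp: "\<sigma> permutes {..<n}" for \<sigma>
  proof -
    define W where "W = Wr a g \<eta> \<sigma> n"
    have ep: "sgd_epoch n a b \<eta> \<sigma> x = xs + c * (x - xs) + \<eta>^2 * W" for x
      unfolding c_def W_def g_def by (rule epoch_form[OF sp gsum])
    have it: "sgd_ss n a b \<eta> \<sigma> k x0 = xs + c^k * (x0 - xs) + A * (\<eta>^2 * W)"
      unfolding sgd_ss_def A_def by (rule iter_form[OF ep])
    have Wb: "\<bar>W\<bar> \<le> L * (\<Sum>j<n. \<bar>\<Sum>i<j. g (\<sigma> i)\<bar>)"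
      unfolding W_def using Wr_bound[OF aB etap[THEN less_imp_le] etaL sp] by simp
    have CS: "(\<Sum>j<n. \<bar>\<Sum>i<j. g (\<sigma> i)\<bar>)^2 \<le> real n * Q \<sigma>"
      using Cauchy_Schwarz_ineq_sum[of "\<lambda>_. 1" "\<lambda>j. \<bar>\<Sum>i<j. g (\<sigma> i)\<bar>" "{..<n}"]
      unfolding Q_def by simp
    have W2: "W^2 \<le> L^2 * (real n * Q \<sigma>)"
    proof -
      have "W^2 \<le> (L * (\<Sum>j<n. \<bar>\<Sum>i<j. g (\<sigma> i)\<bar>))^2"
        using Wb by (metis abs_ge_zero abs_le_square_iff abs_of_nonneg order.trans power2_abs)
      also have "\<dots> = L^2 * (\<Sum>j<n. \<bar>\<Sum>i<j. g (\<sigma> i)\<bar>)^2" by (simp add: power_mult_distrib)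
      also have "\<dots> \<le> L^2 * (real n * Q \<sigma>)" using CS by (intro mult_left_mono) auto
      finally show ?thesis .
    qed
    have "F_obj n a b (sgd_ss n a b \<eta> \<sigma> k x0) - (INF x. F_obj n a b x)
          = lam / 2 * (c^k * (x0 - xs) + A * (\<eta>^2 * W))^2"
      unfolding INF Fdiff it by simp
    also have "\<dots> \<le> lam / 2 * (2 * (c^k * (x0 - xs))^2 + 2 * (A * (\<eta>^2 * W))^2)"
    proof -
      have "(c^k * (x0 - xs) + A * (\<eta>^2 * W))^2 \<le> 2 * (c^k * (x0 - xs))^2 + 2 * (A * (\<eta>^2 * W))^2"
        by (smt (verit) power2_diff zero_le_power2 power2_sum)
      then show ?thesis using lp by simp
    qed
    also have "\<dots> = lam * ((c^k)^2 * (x0 - xs)^2) + lam * (A^2 * \<eta>^4 * W^2)"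
    proof -
      have e1: "(c^k*(x0-xs))^2 = (c^k)^2*(x0-xs)^2" by (rule power_mult_distrib)
      have e2: "(A*(\<eta>^2*W))^2 = A^2*\<eta>^4*W^2" by (simp add: power_mult_distrib flip: power_mult)
      show ?thesis by (simp only: e1 e2) (simp add: algebra_simps)
    qed
    also have "\<dots> \<le> lam * (1 / (real n * real k^2) * (x0 - xs)^2) + lam * (real k^2 * \<eta>^4 * (L^2 * (real n * Q \<sigma>)))"
    proof (intro add_mono mult_left_mono mult_right_mono mult_mono)
      show "A^2 \<le> real k^2" using A0 Ak by (intro power_mono) auto
    qed (use ck2 W2 lp in auto)
    also have "\<dots> = X + Y * Q \<sigma>" unfolding X_def Y_def by (simp add: algebra_simps)
    finally show ?thesis .
  qed
  have fin: "finite ?P" using finite_permutations by auto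
  have cardP: "card ?P = fact n" using card_permutations[of "{..<n}" n] by simp
  have SQ: "(\<Sum>\<sigma>\<in>?P. Q \<sigma>) \<le> real n * real n * fact n * G^2"
  proof -
    have "(\<Sum>\<sigma>\<in>?P. Q \<sigma>) = (\<Sum>j<n. \<Sum>\<sigma>\<in>?P. (\<Sum>i<j. g (\<sigma> i))^2)"
      unfolding Q_def by (rule sum.swap)
    also have "\<dots> \<le> (\<Sum>j<n. real n * fact n * G^2)"
    proof (rule sum_mono)
      fix j assume j: "j \<in> {..<n}"
      have "(\<Sum>\<sigma>\<in>?P. (\<Sum>i<j. g (\<sigma> i))^2) \<le> real j * fact n * G^2"
        by (rule perm_sq_bound) (use n2 gsum gG j in \<open>auto simp: g_def\<close>)
      also have "\<dots> \<le> real n * fact n * G^2" using j by (intro mult_right_mono) auto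
      finally show "(\<Sum>\<sigma>\<in>?P. (\<Sum>i<j. g (\<sigma> i))^2) \<le> real n * fact n * G^2" .
    qed
    finally show ?thesis by simp
  qed
  have "(\<Sum>\<sigma>\<in>?P. F_obj n a b (sgd_ss n a b \<eta> \<sigma> k x0) - (INF x. F_obj n a b x))
        \<le> (\<Sum>\<sigma>\<in>?P. X + Y * Q \<sigma>)" using pt by (intro sum_mono) auto
  also have "\<dots> = fact n * X + Y * (\<Sum>\<sigma>\<in>?P. Q \<sigma>)"
    by (simp add: sum.distrib sum_distrib_left cardP)
  also have "\<dots> \<le> fact n * X + Y * (real n * real n * fact n * G^2)"
    using SQ Y0 by (intro add_left_mono mult_left_mono) auto
  finally have tot: "perm_expect n (\<lambda>\<sigma>. F_obj n a b (sgd_ss n a b \<eta> \<sigma> k x0) - (INF x. F_obj n a b x))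
       \<le> X + Y * (real n * real n * G^2)"
    unfolding perm_expect_def by (simp add: divide_le_eq algebra_simps)
  have eqn: "X + Y * (real n * real n * G^2) = lam / (real n * real k^2) * (x0 - xs)^2
             + l^4 * (G^2 * L^2 / (lam^3 * real n * real k^2))"
    unfolding X_def Y_def etal using lp npos kpos by (simp add: field_simps power_mult_distrib power_divide power2_eq_square power4_eq_xxxx power3_eq_cube)
  define M where "M = 1 + ln (real n * real k)"
  have "1 \<le> real n" "1 \<le> real k" using n2 k1 by auto
  then have "1 \<le> real n * real k" using mult_mono[of 1 "real n" 1 "real k"] by simp
  then have lnk: "ln (real n * real k) \<ge> 0" by simp
  have lM: "l \<le> M"
  proof -
    have "sqrt (real n) * 1 \<le> sqrt (real n) * sqrt (real n)" using sq1 by (intro mult_left_mono) auto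
    then have "sqrt (real n) \<le> real n" by simp
    then have "sqrt (real n) * real k \<le> real n * real k" using kpos by simp
    then have "l \<le> ln (real n * real k)" unfolding l_def using sk by simp
    then show ?thesis unfolding M_def by simp
  qed
  have M1: "1 \<le> M^4" unfolding M_def using lnk by (simp add: one_le_power)
  have l4: "l^4 \<le> M^4" using lM lpos by (intro power_mono) auto
  have Mpow: "M powr 4 = M^4" unfolding M_def using lnk by simp
  have T1: "0 \<le> lam / (real n * real k^2) * (x0 - xs)^2" using lp npos kpos by simp
  have T2: "0 \<le> G^2 * L^2 / (lam^3 * real n * real k^2)" using lp npos kpos by simp
  have "lam / (real n * real k^2) * (x0 - xs)^2 + l^4 * (G^2 * L^2 / (lam^3 * real n * real k^2))
        \<le> M^4 * (lam / (real n * real k^2) * (x0 - xs)^2) + M^4 * (G^2 * L^2 / (lam^3 * real n * real k^2))"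
    using add_mono[OF mult_right_mono[OF M1 T1] mult_right_mono[OF l4 T2]] by simp
  then show ?thesis using tot eqn Mpow unfolding M_def by (simp add: algebra_simps)
qed

theorem theorem4:
  "\<exists>C p::real. C > 0 \<and> p \<ge> 0 \<and>
    (\<forall>(n::nat) (k::nat) (a::nat \<Rightarrow> real) (b::nat \<Rightarrow> real) (lam::real) (L::real) (G::real) (x0::real) (xs::real).
      n \<ge> 2 \<longrightarrow> k \<ge> 1 \<longrightarrow> lam > 0 \<longrightarrow> L > 0 \<longrightarrow> G > 0 \<longrightarrow>
      (\<forall>i<n. 0 \<le> a i \<and> a i \<le> L) \<longrightarrow>
      (\<Sum>i<n. a i) / real n = lam \<longrightarrow>
      (\<forall>x. F_obj n a b xs \<le> F_obj n a b x) \<longrightarrow>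
      (\<forall>i<n. \<bar>a i * xs - b i\<bar> \<le> G) \<longrightarrow>
      L / lam \<le> real n * real k / ln (sqrt (real n) * real k) \<longrightarrow>
      (let \<eta> = ln (sqrt (real n) * real k) / (lam * real n * real k) in
        perm_expect n (\<lambda>\<sigma>. F_obj n a b (sgd_ss n a b \<eta> \<sigma> k x0) - (INF x. F_obj n a b x))
        \<le> C * (1 + ln (real n * real k)) powr p *
            (lam / (real n * real k^2) * (x0 - xs)^2
             + G^2 * L^2 / (lam^3 * real n * real k^2))))"
  apply (rule exI[of _ 1], rule exI[of _ 4])
  apply (intro conjI, simp, simp)
  apply (intro allI impI)
  apply (unfold Let_def)
  apply (rule main_bound)
  apply assumption+
  apply (rule refl)
  done

end
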